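(* For a given diagonal section $\delta$ the function $D_\delta\colon [0,1]^2\to[0,1]$ defined by $$D_\delta(x,y)=\begin{cases}\overline{C}_\delta(x,y); & x\le y,\\ B_\delta(x,y); & x\ge y,\end{cases}$$ (the diagonal splice of $\overline{C}_\delta$ and $B_\delta$) is a copula.
   Context: A diagonal section is a function $\delta\colon[0,1]\to[0,1]$ that is the diagonal $x\mapsto C(x,x)$ of some bivariate copula $C$; equivalently $\delta(x)\le x$ for all $x$, $0\le\delta(y)-\delta(x)\le 2(y-x)$ for $x\le y$, and $\delta(1)=1$. Write $\widehat{\delta}(x)=x-\delta(x)$. Here $\overline{C}_\delta(x,y)=\sup\{C(x,y)\colon C \text{ a copula with } C(t,t)=\delta(t)\ \forall t\}$ is the pointwise supremum of all copulas with diagonal section $\delta$, and $B_\delta$ is the Bertino copula $B_\delta(x,y)=\min\{x,y\}-\min_{t\in[\min\{x,y\},\max\{x,y\}]}\widehat{\delta}(t)$. The two functions agree on the diagonal (both equal $\delta$ there), so the splice is well defined. *)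

theory Defs
  imports Complex_Main
begin

text \<open>A (bivariate) copula, viewed as a function on the unit square [0,1]^2
  (values outside the square are irrelevant).\<close>
definition copula :: "(real \<Rightarrow> real \<Rightarrow> real) \<Rightarrow> bool" where
  "copula C \<longleftrightarrow>
     (\<forall>x\<in>{0..1}. \<forall>y\<in>{0..1}. C x y \<in> {0..1}) \<and>
     (\<forall>x\<in>{0..1}. C x 0 = 0 \<and> C 0 x = 0 \<and> C x 1 = x \<and> C 1 x = x) \<and>
     (\<forall>x1\<in>{0..1}. \<forall>x2\<in>{0..1}. \<forall>y1\<in>{0..1}. \<forall>y2\<in>{0..1}.
        x1 \<le> x2 \<longrightarrow> y1 \<le> y2 \<longrightarrow> C x2 y2 - C x2 y1 - C x1 y2 + C x1 y1 \<ge> 0)"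

definition has_diagonal :: "(real \<Rightarrow> real \<Rightarrow> real) \<Rightarrow> (real \<Rightarrow> real) \<Rightarrow> bool" where
  "has_diagonal C \<delta> \<longleftrightarrow> (\<forall>t\<in>{0..1}. C t t = \<delta> t)"

definition diagonal_section :: "(real \<Rightarrow> real) \<Rightarrow> bool" where
  "diagonal_section \<delta> \<longleftrightarrow> (\<exists>C. copula C \<and> has_diagonal C \<delta>)"

definition Cbar :: "(real \<Rightarrow> real) \<Rightarrow> real \<Rightarrow> real \<Rightarrow> real" where
  "Cbar \<delta> x y = Sup {C x y | C. copula C \<and> has_diagonal C \<delta>}"

definition Bertino :: "(real \<Rightarrow> real) \<Rightarrow> real \<Rightarrow> real \<Rightarrow> real" where
  "Bertino \<delta> x y = min x y - Inf ((\<lambda>t. t - \<delta> t) ` {min x y..max x y})"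

definition Dsplice :: "(real \<Rightarrow> real) \<Rightarrow> real \<Rightarrow> real \<Rightarrow> real" where
  "Dsplice \<delta> x y = (if x \<le> y then Cbar \<delta> x y else Bertino \<delta> x y)"

end

theory Submission
  imports Defs
begin

lemma cop_range: "copula C \<Longrightarrow> x\<in>{0..1} \<Longrightarrow> y\<in>{0..1} \<Longrightarrow> 0 \<le> C x y \<and> C x y \<le> 1"
  unfolding copula_def by auto

lemma cop_bd: "copula C \<Longrightarrow> x\<in>{0..1} \<Longrightarrow> C x 0 = 0 \<and> C 0 x = 0 \<and> C x 1 = x \<and> C 1 x = x"
  unfolding copula_def by auto

lemma cop_vol: "copula C \<Longrightarrow> x1\<in>{0..1} \<Longrightarrow> x2\<in>{0..1} \<Longrightarrow> y1\<in>{0..1} \<Longrightarrow> y2\<in>{0..1}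
  \<Longrightarrow> x1 \<le> x2 \<Longrightarrow> y1 \<le> y2 \<Longrightarrow> C x2 y2 - C x2 y1 - C x1 y2 + C x1 y1 \<ge> 0"
  unfolding copula_def by blast

lemma cop_mono2: assumes "copula C" "x\<in>{0..1}" "y1\<in>{0..1}" "y2\<in>{0..1}" "y1 \<le> y2"
  shows "C x y1 \<le> C x y2"
  using cop_vol[OF assms(1) _ assms(2) assms(3) assms(4) _ assms(5), of 0] cop_bd[OF assms(1)] assms by auto

lemma cop_mono1: assumes "copula C" "y\<in>{0..1}" "x1\<in>{0..1}" "x2\<in>{0..1}" "x1 \<le> x2"
  shows "C x1 y \<le> C x2 y"
  using cop_vol[OF assms(1) assms(3) assms(4) _ assms(2) assms(5), of 0] cop_bd[OF assms(1)] assms by auto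

lemma cop_lip1: assumes "copula C" "y\<in>{0..1}" "x1\<in>{0..1}" "x2\<in>{0..1}" "x1 \<le> x2"
  shows "C x2 y - C x1 y \<le> x2 - x1"
  using cop_vol[OF assms(1) assms(3) assms(4) assms(2) _ assms(5), of 1] cop_bd[OF assms(1)] assms by auto

lemma cop_lip2: assumes "copula C" "x\<in>{0..1}" "y1\<in>{0..1}" "y2\<in>{0..1}" "y1 \<le> y2"
  shows "C x y2 - C x y1 \<le> y2 - y1"
  using cop_vol[OF assms(1) assms(2) _ assms(3) assms(4) _ assms(5), of 1] cop_bd[OF assms(1)] assms by auto

lemma copula_cong: assumes "copula C" "\<And>x y. x\<in>{0..1} \<Longrightarrow> y\<in>{0..1} \<Longrightarrow> D x y = C x y"
  shows "copula D"
  using assms(1) unfolding copula_def by (simp add: assms(2))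

definition mm :: "(real\<Rightarrow>real) \<Rightarrow> real \<Rightarrow> real \<Rightarrow> real" where
  "mm \<delta> a b = Inf ((\<lambda>t. t - \<delta> t) ` {a..b})"

definition TT :: "(real\<Rightarrow>real) \<Rightarrow> real \<Rightarrow> real \<Rightarrow> real" where
  "TT \<delta> a b = (a - \<delta> a) - mm \<delta> a b"

fun ps :: "(real\<Rightarrow>real) \<Rightarrow> real \<Rightarrow> real list \<Rightarrow> real" where
  "ps \<delta> a [] = 0"
| "ps \<delta> a (b # r) = TT \<delta> a b + ps \<delta> b r"

definition psi :: "(real\<Rightarrow>real) \<Rightarrow> real \<Rightarrow> real" where
  "psi \<delta> x = Sup {ps \<delta> 0 P | P. sorted (0 # P) \<and> last (0 # P) = x}"

definition FF :: "(real\<Rightarrow>real) \<Rightarrow> real \<Rightarrow> real \<Rightarrow> real" where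
  "FF \<delta> x y = min x (\<delta> y - psi \<delta> y + psi \<delta> x)"

definition EE :: "(real\<Rightarrow>real) \<Rightarrow> real \<Rightarrow> real \<Rightarrow> real" where
  "EE \<delta> x y = (if x \<le> y then FF \<delta> x y else y - mm \<delta> y x)"

lemma sorted_le_last: "sorted (s # Q) \<Longrightarrow> x \<in> set (s # Q) \<Longrightarrow> x \<le> last (s # Q)"
proof (induction Q arbitrary: s x)
  case Nil then show ?case by simp
next
  case (Cons c r)
  then show ?case by (cases "x = s") fastforce+
qed

lemma sorted_ge_hd: "sorted (s # Q) \<Longrightarrow> x \<in> set Q \<Longrightarrow> s \<le> x"
  by simp

lemma ps_append: "ps \<delta> s (P @ [b]) = ps \<delta> s P + TT \<delta> (last (s # P)) b"
  by (induction P arbitrary: s) auto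

context
  fixes \<delta> :: "real \<Rightarrow> real" and C0 :: "real \<Rightarrow> real \<Rightarrow> real"
  assumes cop0: "copula C0" and dg0: "has_diagonal C0 \<delta>"
begin

lemma dC: "t\<in>{0..1} \<Longrightarrow> C0 t t = \<delta> t"
  using dg0 unfolding has_diagonal_def by auto

lemma d0: "\<delta> 0 = 0" and d1: "\<delta> 1 = 1"
  using dC[of 0] dC[of 1] cop_bd[OF cop0, of 0] cop_bd[OF cop0, of 1] by auto

lemma d_le: "t\<in>{0..1} \<Longrightarrow> \<delta> t \<le> t"
  using dC[of t] cop_mono2[OF cop0, of t t 1] cop_bd[OF cop0, of t] by auto

lemma d_ge: "t\<in>{0..1} \<Longrightarrow> 0 \<le> \<delta> t"
  using dC[of t] cop_range[OF cop0, of t t] by auto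

lemma d_mono: "s\<in>{0..1} \<Longrightarrow> t\<in>{0..1} \<Longrightarrow> s \<le> t \<Longrightarrow> \<delta> s \<le> \<delta> t"
  using dC[of s] dC[of t] cop_mono1[OF cop0, of s s t] cop_mono2[OF cop0, of t s t] by auto

lemma d_lip: "s\<in>{0..1} \<Longrightarrow> t\<in>{0..1} \<Longrightarrow> s \<le> t \<Longrightarrow> \<delta> t - \<delta> s \<le> 2*(t - s)"
  using dC[of s] dC[of t] cop_lip1[OF cop0, of t s t] cop_lip2[OF cop0, of s s t] by auto

lemma h_lip: "s\<in>{0..1} \<Longrightarrow> t\<in>{0..1} \<Longrightarrow> s \<le> t \<Longrightarrow> \<bar>(t - \<delta> t) - (s - \<delta> s)\<bar> \<le> t - s"
  using d_mono[of s t] d_lip[of s t] by auto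

lemma h_nonneg: "t\<in>{0..1} \<Longrightarrow> 0 \<le> t - \<delta> t"
  using d_le by auto

lemma mm_props:
  assumes "0 \<le> a" "a \<le> b" "b \<le> 1"
  shows "(\<lambda>t. t - \<delta> t) ` {a..b} \<noteq> {}" "bdd_below ((\<lambda>t. t - \<delta> t) ` {a..b})"
  using assms h_nonneg by (auto intro!: bdd_belowI[where m=0])

lemma mm_le: "0 \<le> a \<Longrightarrow> b \<le> 1 \<Longrightarrow> t\<in>{a..b} \<Longrightarrow> mm \<delta> a b \<le> t - \<delta> t"
  unfolding mm_def using mm_props[of a b] by (intro cInf_lower) auto

lemma mm_ge: "0 \<le> a \<Longrightarrow> a \<le> b \<Longrightarrow> b \<le> 1 \<Longrightarrow> (\<And>t. t\<in>{a..b} \<Longrightarrow> c \<le> t - \<delta> t) \<Longrightarrow> c \<le> mm \<delta> a b"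
  unfolding mm_def using mm_props[of a b] by (intro cInf_greatest) auto

lemma mm_nonneg: "0 \<le> a \<Longrightarrow> a \<le> b \<Longrightarrow> b \<le> 1 \<Longrightarrow> 0 \<le> mm \<delta> a b"
  using mm_ge[of a b 0] h_nonneg by auto

lemma mm_split: assumes "0 \<le> a" "a \<le> b" "b \<le> c" "c \<le> 1"
  shows "mm \<delta> a c = min (mm \<delta> a b) (mm \<delta> b c)"
proof -
  have "{a..c} = {a..b} \<union> {b..c}" using assms by auto
  then have "(\<lambda>t. t - \<delta> t) ` {a..c} = (\<lambda>t. t - \<delta> t) ` {a..b} \<union> (\<lambda>t. t - \<delta> t) ` {b..c}" by auto
  then show ?thesis unfolding mm_def
    using mm_props[of a b] mm_props[of b c] assms
    by (simp add: cInf_union_distrib inf_min)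
qed

lemma mm_same: "t\<in>{0..1} \<Longrightarrow> mm \<delta> t t = t - \<delta> t"
  unfolding mm_def by simp

lemma mm_lip: assumes "0 \<le> a" "a \<le> b" "b \<le> 1"
  shows "(a - \<delta> a) - (b - a) \<le> mm \<delta> a b"
proof (rule mm_ge)
  fix t assume t: "t \<in> {a..b}"
  then have "\<bar>(t - \<delta> t) - (a - \<delta> a)\<bar> \<le> t - a" using assms by (intro h_lip) auto
  then show "(a - \<delta> a) - (b - a) \<le> t - \<delta> t" using t by (auto simp: abs_le_iff)
qed (use assms in auto)

lemma mm_0: "x\<in>{0..1} \<Longrightarrow> mm \<delta> 0 x = 0"
  using mm_nonneg[of 0 x] mm_le[of 0 x 0] d0 by auto

lemma mm_1: "x\<in>{0..1} \<Longrightarrow> mm \<delta> x 1 = 0"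
  using mm_nonneg[of x 1] mm_le[of x 1 1] d1 by auto

lemma TT_le: "0 \<le> a \<Longrightarrow> a \<le> b \<Longrightarrow> b \<le> 1 \<Longrightarrow> TT \<delta> a b \<le> b - a"
  unfolding TT_def using mm_lip[of a b] by auto

lemma TT_super: assumes "0 \<le> a" "a \<le> b" "b \<le> c" "c \<le> 1"
  shows "TT \<delta> a c \<le> TT \<delta> a b + TT \<delta> b c"
  using mm_split[OF assms] mm_le[of a b b] mm_le[of b c b] assms
  unfolding TT_def by (auto simp: min_def)

lemma bert_lower: assumes "copula C" "has_diagonal C \<delta>" "0 \<le> a" "a \<le> b" "b \<le> 1"
  shows "a - mm \<delta> a b \<le> C b a"
proof -
  have "a - C b a \<le> mm \<delta> a b"
  proof (rule mm_ge)
    fix t assume t: "t \<in> {a..b}"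
    have "C t a \<le> C b a" using cop_mono1[OF assms(1), of a t b] t assms by auto
    moreover have "C t t - C t a \<le> t - a" using cop_lip2[OF assms(1), of t a t] t assms by auto
    moreover have "C t t = \<delta> t" using assms(2) t assms unfolding has_diagonal_def by auto
    ultimately show "a - C b a \<le> t - \<delta> t" by linarith
  qed (use assms in auto)
  then show ?thesis by linarith
qed

lemma key_step: assumes "copula C" "has_diagonal C \<delta>" "0 \<le> a" "a \<le> s" "s \<le> c" "c \<le> 1"
  shows "TT \<delta> s c \<le> \<delta> c - C a c - \<delta> s + C a s"
proof -
  have diag: "\<And>t. t\<in>{0..1} \<Longrightarrow> C t t = \<delta> t" using assms(2) unfolding has_diagonal_def by auto
  have v1: "C c c - C c s - C s c + C s s \<ge> 0" using cop_vol[OF assms(1), of s c s c] assms by auto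
  have v2: "C s c - C s s - C a c + C a s \<ge> 0" using cop_vol[OF assms(1), of a s s c] assms by auto
  have bl: "s - mm \<delta> s c \<le> C c s" using bert_lower[OF assms(1,2), of s c] assms by auto
  show ?thesis unfolding TT_def using v1 v2 bl diag[of s] diag[of c] assms by auto
qed

lemma ps_bound: assumes "copula C" "has_diagonal C \<delta>"
  shows "0 \<le> a \<Longrightarrow> a \<le> s \<Longrightarrow> sorted (s # Q) \<Longrightarrow> last (s # Q) \<le> 1 \<Longrightarrow>
    ps \<delta> s Q \<le> (\<delta> (last (s#Q)) - C a (last (s#Q))) - (\<delta> s - C a s)"
proof (induction Q arbitrary: s)
  case Nil then show ?case by simp
next
  case (Cons c r)
  have sc: "s \<le> c" using Cons.prems(3) by simp
  have cr: "sorted (c # r)" using Cons.prems(3) by simp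
  have cl: "c \<le> last (c # r)" using sorted_le_last[OF cr, of c] by simp
  have l: "last (s # c # r) = last (c # r)" by simp
  have IH: "ps \<delta> c r \<le> (\<delta> (last (c#r)) - C a (last (c#r))) - (\<delta> c - C a c)"
    using Cons.IH[of c] Cons.prems sc cr by simp
  have "TT \<delta> s c \<le> \<delta> c - C a c - \<delta> s + C a s"
    using key_step[OF assms, of a s c] Cons.prems sc cl l by auto
  then show ?case using IH l by simp
qed

end

context
  fixes \<delta> :: "real \<Rightarrow> real" and C0 :: "real \<Rightarrow> real \<Rightarrow> real"
  assumes cop0: "copula C0" and dg0: "has_diagonal C0 \<delta>"
begin

lemma sorted_cons_trans: "s \<le> c \<Longrightarrow> sorted (c # r) \<Longrightarrow> sorted (s # c # r)"
  by (auto intro: order_trans)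

lemma ps_split:
  "sorted (s # P) \<Longrightarrow> last (s # P) = b \<Longrightarrow> s \<le> a \<Longrightarrow> a \<le> b \<Longrightarrow> 0 \<le> s \<Longrightarrow> b \<le> 1 \<Longrightarrow>
   \<exists>P1 P2. sorted (s # P1) \<and> last (s # P1) = a \<and> sorted (a # P2) \<and> last (a # P2) = b
     \<and> ps \<delta> s P \<le> ps \<delta> s P1 + ps \<delta> a P2"
proof (induction P arbitrary: s)
  case Nil
  then show ?case by (intro exI[of _ "[]"]) auto
next
  case (Cons c r)
  have sc: "s \<le> c" using Cons.prems(1) by simp
  have cr: "sorted (c # r)" using Cons.prems(1) by simp
  have lb: "last (c # r) = b" using Cons.prems(2) by simp
  have cb: "c \<le> b" using sorted_le_last[OF cr, of c] lb by simp
  show ?case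
  proof (cases "c \<le> a")
    case True
    obtain P1 P2 where P: "sorted (c # P1)" "last (c # P1) = a" "sorted (a # P2)" "last (a # P2) = b"
      "ps \<delta> c r \<le> ps \<delta> c P1 + ps \<delta> a P2"
      using Cons.IH[OF cr lb True] Cons.prems sc by auto
    show ?thesis
      by (rule exI[of _ "c # P1"], rule exI[of _ P2])
        (use P sc sorted_cons_trans[OF sc P(1)] in auto)
  next
    case False
    have "TT \<delta> s c \<le> TT \<delta> s a + TT \<delta> a c"
      using TT_super[OF cop0 dg0, of s a c] Cons.prems False cb by auto
    moreover have "sorted (a # c # r)" using sorted_cons_trans[of a c r] False cr by auto
    ultimately show ?thesis
      by (intro exI[of _ "[a]"] exI[of _ "c # r"]) (use Cons.prems lb in auto)
  qed
qed

lemma ps_ub: assumes "sorted (0 # P)" "last (0 # P) = x" "x \<le> 1" shows "ps \<delta> 0 P \<le> 1"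
proof -
  have x0: "0 \<le> x" using sorted_le_last[OF assms(1), of 0] assms(2) by simp
  have "ps \<delta> 0 P \<le> (\<delta> x - C0 0 x) - (\<delta> 0 - C0 0 0)"
    using ps_bound[OF cop0 dg0 cop0 dg0, of 0 0 P] assms by simp
  moreover have "C0 0 x = 0" "C0 0 0 = 0" using cop_bd[OF cop0, of x] cop_bd[OF cop0, of 0] x0 assms(3) by auto
  moreover have "\<delta> 0 = 0" using d0[OF cop0 dg0] .
  moreover have "\<delta> x \<le> x" using d_le[OF cop0 dg0, of x] x0 assms(3) by simp
  ultimately show ?thesis using assms(3) by linarith
qed

lemma psi_set:
  assumes "x \<in> {0..1}"
  shows "{ps \<delta> 0 P | P. sorted (0 # P) \<and> last (0 # P) = x} \<noteq> {}"
    "bdd_above {ps \<delta> 0 P | P. sorted (0 # P) \<and> last (0 # P) = x}"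
proof -
  have "sorted (0 # [x])" "last (0 # [x]) = x" using assms by auto
  then have "ps \<delta> 0 [x] \<in> {ps \<delta> 0 P | P. sorted (0 # P) \<and> last (0 # P) = x}" by blast
  then show "{ps \<delta> 0 P | P. sorted (0 # P) \<and> last (0 # P) = x} \<noteq> {}" by blast
  show "bdd_above {ps \<delta> 0 P | P. sorted (0 # P) \<and> last (0 # P) = x}"
  proof (rule bdd_aboveI[of _ 1])
    fix y assume "y \<in> {ps \<delta> 0 P | P. sorted (0 # P) \<and> last (0 # P) = x}"
    then obtain P where "y = ps \<delta> 0 P" "sorted (0 # P)" "last (0 # P) = x" by blast
    then show "y \<le> 1" using ps_ub[of P x] assms by simp
  qed
qed

lemma psi_upper: "x \<in> {0..1} \<Longrightarrow> sorted (0 # P) \<Longrightarrow> last (0 # P) = x \<Longrightarrow> ps \<delta> 0 P \<le> psi \<delta> x"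
  unfolding psi_def using psi_set[of x] by (intro cSup_upper) auto

lemma psi_least: "x \<in> {0..1} \<Longrightarrow> (\<And>P. sorted (0 # P) \<Longrightarrow> last (0 # P) = x \<Longrightarrow> ps \<delta> 0 P \<le> M) \<Longrightarrow> psi \<delta> x \<le> M"
  unfolding psi_def using psi_set[of x] by (intro cSup_least) auto

lemma psi_P1: assumes "0 \<le> a" "a \<le> b" "b \<le> 1"
  shows "psi \<delta> a + TT \<delta> a b \<le> psi \<delta> b"
proof -
  have "psi \<delta> a \<le> psi \<delta> b - TT \<delta> a b"
  proof (rule psi_least)
    fix P assume P: "sorted (0 # P)" "last (0 # P) = a"
    have "\<forall>x\<in>set (0 # P). x \<le> a" using sorted_le_last[OF P(1)] P(2) by auto
    then have "sorted ((0 # P) @ [b])" using P(1) assms by (auto simp: sorted_append)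
    then have s: "sorted (0 # (P @ [b]))" by simp
    have "ps \<delta> 0 (P @ [b]) \<le> psi \<delta> b" using psi_upper[OF _ s] assms by auto
    then show "ps \<delta> 0 P \<le> psi \<delta> b - TT \<delta> a b" using ps_append[of \<delta> 0 P b] P(2) by simp
  qed (use assms in auto)
  then show ?thesis by simp
qed

lemma psi_P2: assumes "copula C" "has_diagonal C \<delta>" "0 \<le> a" "a \<le> b" "b \<le> 1"
  shows "psi \<delta> b \<le> psi \<delta> a + (\<delta> b - C a b)"
proof (rule psi_least)
  fix P assume P: "sorted (0 # P)" "last (0 # P) = b"
  obtain P1 P2 where Q: "sorted (0 # P1)" "last (0 # P1) = a" "sorted (a # P2)" "last (a # P2) = b"
      "ps \<delta> 0 P \<le> ps \<delta> 0 P1 + ps \<delta> a P2"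
    using ps_split[OF P] assms by blast
  have "ps \<delta> 0 P1 \<le> psi \<delta> a" using psi_upper[OF _ Q(1,2)] assms by auto
  moreover have "ps \<delta> a P2 \<le> (\<delta> b - C a b) - (\<delta> a - C a a)"
    using ps_bound[OF cop0 dg0 assms(1,2), of a a P2] Q(3,4) assms by auto
  moreover have "C a a = \<delta> a" using assms(2,3,4,5) unfolding has_diagonal_def by auto
  ultimately show "ps \<delta> 0 P \<le> psi \<delta> a + (\<delta> b - C a b)" using Q(5) by linarith
qed (use assms in auto)

end

definition vol :: "(real \<Rightarrow> real \<Rightarrow> real) \<Rightarrow> real \<Rightarrow> real \<Rightarrow> real \<Rightarrow> real \<Rightarrow> real" where
  "vol E x1 x2 y1 y2 = E x2 y2 - E x2 y1 - E x1 y2 + E x1 y1"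

lemma vol_split9:
  "vol E x1 x2 y1 y2 =
     vol E x1 a y1 c + vol E x1 a c d + vol E x1 a d y2
   + vol E a b y1 c + vol E a b c d + vol E a b d y2
   + vol E b x2 y1 c + vol E b x2 c d + vol E b x2 d y2"
  unfolding vol_def by simp

lemma vol_degx: "vol E x x y1 y2 = 0" and vol_degy: "vol E x1 x2 y y = 0"
  unfolding vol_def by simp_all

lemma min_supermod: "(p1::real) \<le> p2 \<Longrightarrow> q1 \<le> q2 \<Longrightarrow> 0 \<le> min p2 q2 - min p2 q1 - min p1 q2 + min p1 q1"
  by (auto simp: min_def)

lemma min3_ineq: "0 \<le> min (A::real) (min M B) + M - min M B - min A M"
  by (auto simp: min_def)

context
  fixes \<delta> :: "real \<Rightarrow> real" and C0 :: "real \<Rightarrow> real \<Rightarrow> real"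
  assumes cop0: "copula C0" and dg0: "has_diagonal C0 \<delta>"
begin

lemma psi_inc_d: assumes "0 \<le> a" "a \<le> b" "b \<le> 1" shows "psi \<delta> b - psi \<delta> a \<le> \<delta> b - \<delta> a"
  using psi_P2[OF cop0 dg0 cop0 dg0 assms] cop_mono2[OF cop0, of a a b] dC[OF cop0 dg0, of a] assms by auto

lemma psi_inc_id: assumes "0 \<le> a" "a \<le> b" "b \<le> 1" shows "psi \<delta> b - psi \<delta> a \<le> b - a"
  using psi_P2[OF cop0 dg0 cop0 dg0 assms] cop_lip1[OF cop0, of b a b] dC[OF cop0 dg0, of b] assms by auto

lemma FF_alt: "FF \<delta> x y = psi \<delta> x + min (x - psi \<delta> x) (\<delta> y - psi \<delta> y)"
  unfolding FF_def by (simp add: min_def)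

lemma FF_diag: "t \<in> {0..1} \<Longrightarrow> FF \<delta> t t = \<delta> t"
  unfolding FF_def using d_le[OF cop0 dg0, of t] by simp

lemma EE_up: "x \<le> y \<Longrightarrow> EE \<delta> x y = FF \<delta> x y"
  unfolding EE_def by simp

lemma EE_low: "x \<in> {0..1} \<Longrightarrow> y \<le> x \<Longrightarrow> EE \<delta> x y = y - mm \<delta> y x"
  unfolding EE_def using FF_diag[of x] mm_same[OF cop0 dg0, of x] by auto

lemma vol_U: assumes "0 \<le> x1" "x1 \<le> x2" "x2 \<le> y1" "y1 \<le> y2" "y2 \<le> 1"
  shows "0 \<le> vol (EE \<delta>) x1 x2 y1 y2"
proof -
  have p: "x1 - psi \<delta> x1 \<le> x2 - psi \<delta> x2" using psi_inc_id[of x1 x2] assms by auto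
  have q: "\<delta> y1 - psi \<delta> y1 \<le> \<delta> y2 - psi \<delta> y2" using psi_inc_d[of y1 y2] assms by auto
  show ?thesis unfolding vol_def using assms min_supermod[OF p q]
    by (simp add: EE_up FF_alt)
qed

lemma vol_L: assumes "0 \<le> y1" "y1 \<le> y2" "y2 \<le> x1" "x1 \<le> x2" "x2 \<le> 1"
  shows "0 \<le> vol (EE \<delta>) x1 x2 y1 y2"
proof -
  have e1: "mm \<delta> y1 x2 = min (mm \<delta> y1 y2) (min (mm \<delta> y2 x1) (mm \<delta> x1 x2))"
    using mm_split[OF cop0 dg0, of y1 y2 x2] mm_split[OF cop0 dg0, of y2 x1 x2] assms by auto
  have e2: "mm \<delta> y2 x2 = min (mm \<delta> y2 x1) (mm \<delta> x1 x2)"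
    using mm_split[OF cop0 dg0, of y2 x1 x2] assms by auto
  have e3: "mm \<delta> y1 x1 = min (mm \<delta> y1 y2) (mm \<delta> y2 x1)"
    using mm_split[OF cop0 dg0, of y1 y2 x1] assms by auto
  have "vol (EE \<delta>) x1 x2 y1 y2 = mm \<delta> y1 x2 + mm \<delta> y2 x1 - mm \<delta> y2 x2 - mm \<delta> y1 x1"
    unfolding vol_def using assms by (simp add: EE_low)
  then show ?thesis using e1 e2 e3 min3_ineq by simp
qed

lemma vol_S: assumes "0 \<le> a" "a \<le> b" "b \<le> 1"
  shows "0 \<le> vol (EE \<delta>) a b a b"
proof (cases "a = b")
  case True then show ?thesis by (simp add: vol_degx)
next
  case False
  have "FF \<delta> a b \<le> \<delta> b - psi \<delta> b + psi \<delta> a" unfolding FF_def by simp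
  moreover have "psi \<delta> a + TT \<delta> a b \<le> psi \<delta> b" using psi_P1[OF cop0 dg0 assms] .
  moreover have "EE \<delta> b a = a - mm \<delta> a b" using EE_low[of b a] assms by auto
  moreover have "EE \<delta> a a = \<delta> a" "EE \<delta> b b = \<delta> b" using FF_diag[of a] FF_diag[of b] assms by (auto simp: EE_up)
  ultimately show ?thesis unfolding vol_def TT_def using assms by (simp add: EE_up)
qed

lemma vol_EE: assumes "0 \<le> x1" "x1 \<le> x2" "x2 \<le> 1" "0 \<le> y1" "y1 \<le> y2" "y2 \<le> 1"
  shows "0 \<le> vol (EE \<delta>) x1 x2 y1 y2"
proof (cases "x2 \<le> y1")
  case True then show ?thesis using vol_U assms by auto
next
  case n1: False
  show ?thesis
  proof (cases "y2 \<le> x1")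
    case True then show ?thesis using vol_L assms by auto
  next
    case n2: False
    define a where "a = max x1 y1"
    define b where "b = min x2 y2"
    have ab: "x1 \<le> a" "y1 \<le> a" "a \<le> b" "b \<le> x2" "b \<le> y2" "0 \<le> a" "b \<le> 1"
      using n1 n2 assms unfolding a_def b_def by auto
    have z1: "vol (EE \<delta>) x1 a y1 a = 0"
      using vol_degx[of "EE \<delta>" x1] vol_degy[of "EE \<delta>" x1 a y1] unfolding a_def by (cases "x1 \<le> y1") (auto simp: max_def)
    have z9: "vol (EE \<delta>) b x2 b y2 = 0"
      using vol_degx[of "EE \<delta>" x2] vol_degy[of "EE \<delta>" b x2 y2] unfolding b_def by (cases "x2 \<le> y2") (auto simp: min_def)
    have "0 \<le> vol (EE \<delta>) x1 a a b" using vol_U[of x1 a a b] ab assms by auto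
    moreover have "0 \<le> vol (EE \<delta>) x1 a b y2" using vol_U[of x1 a b y2] ab assms by auto
    moreover have "0 \<le> vol (EE \<delta>) a b y1 a" using vol_L[of y1 a a b] ab assms by auto
    moreover have "0 \<le> vol (EE \<delta>) a b a b" using vol_S[of a b] ab by auto
    moreover have "0 \<le> vol (EE \<delta>) a b b y2" using vol_U[of a b b y2] ab assms by auto
    moreover have "0 \<le> vol (EE \<delta>) b x2 y1 a" using vol_L[of y1 a b x2] ab assms by auto
    moreover have "0 \<le> vol (EE \<delta>) b x2 a b" using vol_L[of a b b x2] ab assms by auto
    ultimately show ?thesis using vol_split9[of "EE \<delta>" x1 x2 y1 y2 a a b b] z1 z9 by linarith
  qed
qed

lemma EE_copula: "copula (EE \<delta>)"
proof -
  have range: "EE \<delta> x y \<in> {0..1}" if "x \<in> {0..1}" "y \<in> {0..1}" for x y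
  proof (cases "x \<le> y")
    case True
    have "psi \<delta> y - psi \<delta> x \<le> \<delta> y - \<delta> x" using psi_inc_d[of x y] that True by auto
    then show ?thesis using True that d_ge[OF cop0 dg0, of x] unfolding EE_def FF_def by auto
  next
    case False
    have "mm \<delta> y x \<le> y - \<delta> y" using mm_le[OF cop0 dg0, of y x y] that False by auto
    moreover have "0 \<le> mm \<delta> y x" using mm_nonneg[OF cop0 dg0, of y x] that False by auto
    ultimately show ?thesis using False that d_ge[OF cop0 dg0, of y] unfolding EE_def by auto
  qed
  have bd: "EE \<delta> x 0 = 0 \<and> EE \<delta> 0 x = 0 \<and> EE \<delta> x 1 = x \<and> EE \<delta> 1 x = x" if "x \<in> {0..1}" for x
  proof (intro conjI)
    show "EE \<delta> x 0 = 0"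
    proof (cases "x = 0")
      case True then show ?thesis using FF_diag[of 0] d0[OF cop0 dg0] by (simp add: EE_up)
    next
      case False then show ?thesis using mm_0[OF cop0 dg0, of x] that unfolding EE_def by auto
    qed
    have "psi \<delta> x - psi \<delta> 0 \<le> \<delta> x - \<delta> 0" using psi_inc_d[of 0 x] that by auto
    then show "EE \<delta> 0 x = 0" using that d0[OF cop0 dg0] unfolding EE_def FF_def by auto
    have "psi \<delta> 1 - psi \<delta> x \<le> 1 - x" using psi_inc_id[of x 1] that by auto
    then show "EE \<delta> x 1 = x" using that d1[OF cop0 dg0] unfolding EE_def FF_def by auto
    show "EE \<delta> 1 x = x"
    proof (cases "x = 1")
      case True then show ?thesis using FF_diag[of 1] d1[OF cop0 dg0] by (simp add: EE_up)
    next
      case False then show ?thesis using mm_1[OF cop0 dg0, of x] that unfolding EE_def by auto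
    qed
  qed
  show ?thesis unfolding copula_def
    using range bd vol_EE unfolding vol_def by auto
qed

lemma EE_diag: "has_diagonal (EE \<delta>) \<delta>"
  unfolding has_diagonal_def using FF_diag by (simp add: EE_up)

lemma Cbar_eq: assumes "0 \<le> x" "x \<le> y" "y \<le> 1"
  shows "Cbar \<delta> x y = FF \<delta> x y"
  unfolding Cbar_def
proof (rule cSup_eq_maximum)
  show "FF \<delta> x y \<in> {C x y |C. copula C \<and> has_diagonal C \<delta>}"
  proof -
    have "EE \<delta> x y \<in> {C x y |C. copula C \<and> has_diagonal C \<delta>}"
      using EE_copula EE_diag by blast
    then show ?thesis using EE_up[OF assms(2)] by simp
  qed
  fix z assume "z \<in> {C x y |C. copula C \<and> has_diagonal C \<delta>}"
  then obtain C where C: "z = C x y" "copula C" "has_diagonal C \<delta>" by blast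
  have "C x y \<le> x" using cop_mono2[OF C(2), of x y 1] cop_bd[OF C(2), of x] assms by auto
  moreover have "psi \<delta> y \<le> psi \<delta> x + (\<delta> y - C x y)" using psi_P2[OF cop0 dg0 C(2,3) assms] .
  ultimately show "z \<le> FF \<delta> x y" unfolding FF_def using C(1) by auto
qed

lemma Dsplice_eq: "x \<in> {0..1} \<Longrightarrow> y \<in> {0..1} \<Longrightarrow> Dsplice \<delta> x y = EE \<delta> x y"
  unfolding Dsplice_def EE_def Bertino_def mm_def using Cbar_eq[of x y]
  by (auto simp: min_def max_def)

end

theorem proposition4p3:
  fixes \<delta> :: "real \<Rightarrow> real"
  assumes "diagonal_section \<delta>"
  shows "copula (Dsplice \<delta>)"
proof -
  obtain C0 where C0: "copula C0" "has_diagonal C0 \<delta>" using assms unfolding diagonal_section_def by blast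
  show ?thesis using copula_cong[OF EE_copula[OF C0]] Dsplice_eq[OF C0] by blast
qed

end
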